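(* Let $A\in\mathbb{R}^{m\times n}$ and let $A=P_1-R_1+S_1=P_2-R_2+S_2$ be two double proper regular (respectively, double proper weak regular) splittings of $A$ such that $N(R_2)\supseteq N(P_2)$, $R(R_2)\subseteq R(P_2)$, $-1\notin\sigma(R_2P_1^{\dagger})$ and $\widehat{\mathcal{A}}^{\dagger}\geq 0$, where $\widehat{\mathcal{A}}=(I+R_2P_1^{\dagger})A$. Then $\rho(\mathcal{W}_{12})<1$, where $$\mathcal{W}_{12}=\begin{pmatrix} P_2^{\dagger}R_2P_1^{\dagger}R_1-P_2^{\dagger}S_2 & -P_2^{\dagger}R_2P_1^{\dagger}S_1\\ I & 0\end{pmatrix}.$$
   Context: For $M\in\mathbb{R}^{m\times n}$, $M^{\dagger}$ is its Moore–Penrose inverse, $R(M)$, $N(M)$ its range and null space; inequalities are entrywise; $\rho$ is the spectral radius, $\sigma$ the spectrum. A double splitting $A=P-R+S$ is a double proper splitting if $R(P)=R(A)$ and $N(P)=N(A)$; it is double proper regular if moreover $P^{\dagger}\geq0$, $R\geq0$, $S\leq0$; double proper weak regular if moreover $P^{\dagger}\geq 0$, $P^{\dagger}R\geq 0$, $P^{\dagger}S\leq 0$. *)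

theory Defs
  imports "Jordan_Normal_Form.Spectral_Radius"
begin

definition mp_inverse :: "real mat \<Rightarrow> real mat" where
  "mp_inverse M = (THE X. X \<in> carrier_mat (dim_col M) (dim_row M) \<and>
      M * X * M = M \<and> X * M * X = X \<and>
      transpose_mat (M * X) = M * X \<and> transpose_mat (X * M) = X * M)"

definition range_mat :: "real mat \<Rightarrow> real vec set" where
  "range_mat M = {M *\<^sub>v x | x. x \<in> carrier_vec (dim_col M)}"

definition null_mat :: "real mat \<Rightarrow> real vec set" where
  "null_mat M = {x \<in> carrier_vec (dim_col M). M *\<^sub>v x = 0\<^sub>v (dim_row M)}"

definition nonneg_mat :: "real mat \<Rightarrow> bool" where
  "nonneg_mat M = (\<forall>i < dim_row M. \<forall>j < dim_col M. M $$ (i, j) \<ge> 0)"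

definition nonpos_mat :: "real mat \<Rightarrow> bool" where
  "nonpos_mat M = (\<forall>i < dim_row M. \<forall>j < dim_col M. M $$ (i, j) \<le> 0)"

definition real_spectrum :: "real mat \<Rightarrow> complex set" where
  "real_spectrum M = spectrum (map_mat complex_of_real M)"

definition real_spectral_radius :: "real mat \<Rightarrow> real" where
  "real_spectral_radius M = spectral_radius (map_mat complex_of_real M)"

definition double_proper_splitting :: "real mat \<Rightarrow> real mat \<Rightarrow> real mat \<Rightarrow> real mat \<Rightarrow> bool" where
  "double_proper_splitting A P R S =
     (P \<in> carrier_mat (dim_row A) (dim_col A) \<and> R \<in> carrier_mat (dim_row A) (dim_col A) \<and>
      S \<in> carrier_mat (dim_row A) (dim_col A) \<and>
      A = P - R + S \<and> range_mat P = range_mat A \<and> null_mat P = null_mat A)"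

definition double_proper_regular :: "real mat \<Rightarrow> real mat \<Rightarrow> real mat \<Rightarrow> real mat \<Rightarrow> bool" where
  "double_proper_regular A P R S =
     (double_proper_splitting A P R S \<and> nonneg_mat (mp_inverse P) \<and> nonneg_mat R \<and> nonpos_mat S)"

definition double_proper_weak_regular :: "real mat \<Rightarrow> real mat \<Rightarrow> real mat \<Rightarrow> real mat \<Rightarrow> bool" where
  "double_proper_weak_regular A P R S =
     (double_proper_splitting A P R S \<and> nonneg_mat (mp_inverse P) \<and>
      nonneg_mat (mp_inverse P * R) \<and> nonpos_mat (mp_inverse P * S))"

end

theory Submission
  imports Defs
begin


lemma massoc: assumes "dim_col A = dim_row B" "dim_col B = dim_row C"
  shows "A * B * C = A * (B * (C :: 'a::semiring_0 mat))"
proof -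
  have a: "A \<in> carrier_mat (dim_row A) (dim_col A)" by (rule carrier_mat_triv)
  have b: "B \<in> carrier_mat (dim_col A) (dim_col B)" using assms by (intro carrier_matI) auto
  have c: "C \<in> carrier_mat (dim_col B) (dim_col C)" using assms by (intro carrier_matI) auto
  show ?thesis by (rule assoc_mult_mat[OF a b c])
qed

lemma mtrans: assumes "dim_col A = dim_row B"
  shows "transpose_mat (A * B) = transpose_mat B * transpose_mat (A :: 'a :: comm_semiring_0 mat)"
proof -
  have a: "A \<in> carrier_mat (dim_row A) (dim_col A)" by (rule carrier_mat_triv)
  have b: "B \<in> carrier_mat (dim_col A) (dim_col B)" using assms by (intro carrier_matI) auto
  show ?thesis by (rule transpose_mult[OF a b])
qed

lemma massoc_v: assumes "dim_col A = dim_row B" "dim_col B = dim_vec v"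
  shows "(A * B) *\<^sub>v v = A *\<^sub>v (B *\<^sub>v (v :: 'a::semiring_0 vec))"
proof -
  have a: "A \<in> carrier_mat (dim_row A) (dim_col A)" by (rule carrier_mat_triv)
  have b: "B \<in> carrier_mat (dim_col A) (dim_col B)" using assms by (intro carrier_matI) auto
  have c: "v \<in> carrier_vec (dim_col B)" using assms by (intro carrier_vecI) auto
  show ?thesis by (rule assoc_mult_mat_vec[OF a b c])
qed

lemma mult_unit_index: assumes "A \<in> carrier_mat nr nc" "i < nr" "j < nc"
  shows "(A *\<^sub>v unit_vec nc j) $ i = (A $$ (i,j) :: 'a :: comm_ring_1)"
proof -
  have "(A *\<^sub>v unit_vec nc j) $ i = (\<Sum>l\<in>{0..<nc}. A $$ (i,l) * (if l = j then 1 else 0))"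
    using assms by (simp add: scalar_prod_def unit_vec_def)
  also have "\<dots> = (\<Sum>l\<in>{0..<nc}. (if l = j then A $$ (i,l) else 0))"
    by (rule sum.cong) auto
  also have "\<dots> = A $$ (i,j)" using assms by simp
  finally show ?thesis .
qed

lemma mat_eq_vecI:
  assumes "A \<in> carrier_mat nr nc" "B \<in> carrier_mat nr nc"
    "\<And>v. v \<in> carrier_vec nc \<Longrightarrow> A *\<^sub>v v = B *\<^sub>v (v :: 'a :: comm_ring_1 vec)"
  shows "A = B"
proof (rule eq_matI)
  fix i j assume i: "i < dim_row B" and j: "j < dim_col B"
  have "A *\<^sub>v unit_vec nc j = B *\<^sub>v unit_vec nc j" using assms(3) by simp
  hence "(A *\<^sub>v unit_vec nc j) $ i = (B *\<^sub>v unit_vec nc j) $ i" by simp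
  thus "A $$ (i, j) = B $$ (i, j)" using assms i j mult_unit_index[of A nr nc i j] mult_unit_index[of B nr nc i j] by simp
qed (use assms in auto)

lemma ZtZ:
  fixes Z :: "real mat"
  assumes Z: "Z \<in> carrier_mat a b" and e: "transpose_mat Z * Z = 0\<^sub>m b b"
  shows "Z = 0\<^sub>m a b"
proof (rule eq_matI)
  fix i j assume i: "i < dim_row (0\<^sub>m a b :: real mat)" and j: "j < dim_col (0\<^sub>m a b :: real mat)"
  have "(transpose_mat Z * Z) $$ (j, j) = 0" using e i j by simp
  hence "(\<Sum>l\<in>{0..<a}. Z $$ (l, j) * Z $$ (l, j)) = 0"
    using Z i j by (simp add: scalar_prod_def)
  hence "\<forall>l\<in>{0..<a}. Z $$ (l, j) * Z $$ (l, j) = 0"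
    by (subst sum_nonneg_eq_0_iff[symmetric]) auto
  thus "Z $$ (i, j) = 0\<^sub>m a b $$ (i, j)" using i j by simp
qed (use Z in auto)


lemma cm: "dim_row A = r \<Longrightarrow> dim_col A = c \<Longrightarrow> A \<in> carrier_mat r c" by (intro carrier_matI)

lemma smult_l: "dim_col A = dim_row B \<Longrightarrow> (k \<cdot>\<^sub>m A) * B = (k :: 'a :: comm_semiring_0) \<cdot>\<^sub>m (A * B)"
  by (rule mult_smult_assoc_mat[OF carrier_mat_triv cm]) auto

lemma smult_r: "dim_col A = dim_row B \<Longrightarrow> A * (k \<cdot>\<^sub>m B) = (k :: 'a :: comm_semiring_0) \<cdot>\<^sub>m (A * B)"
  by (rule mult_smult_distrib[OF carrier_mat_triv cm]) auto

lemma dist_l: "dim_row A = dim_row B \<Longrightarrow> dim_col A = dim_col B \<Longrightarrow> dim_col A = dim_row C \<Longrightarrow>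
  (A + B) * C = A * C + B * (C :: 'a :: semiring_0 mat)"
  by (rule add_mult_distrib_mat[OF carrier_mat_triv cm cm]) auto

lemma dist_r: "dim_row B = dim_row C \<Longrightarrow> dim_col B = dim_col C \<Longrightarrow> dim_col A = dim_row B \<Longrightarrow>
  A * (B + C) = A * B + A * (C :: 'a :: semiring_0 mat)"
  by (rule mult_add_distrib_mat[OF carrier_mat_triv cm cm]) auto

lemma distm_l: "dim_row A = dim_row B \<Longrightarrow> dim_col A = dim_col B \<Longrightarrow> dim_col A = dim_row C \<Longrightarrow>
  (A - B) * C = A * C - B * (C :: 'a :: ring mat)"
  by (rule minus_mult_distrib_mat[OF carrier_mat_triv cm cm]) auto

lemma distm_r: "dim_row B = dim_row C \<Longrightarrow> dim_col B = dim_col C \<Longrightarrow> dim_col A = dim_row B \<Longrightarrow>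
  A * (B - C) = A * B - A * (C :: 'a :: ring mat)"
  by (rule mult_minus_distrib_mat[OF carrier_mat_triv cm cm]) auto

lemma trans_add: "dim_row A = dim_row B \<Longrightarrow> dim_col A = dim_col B \<Longrightarrow>
  transpose_mat (A + B) = transpose_mat A + transpose_mat B"
  by (rule transpose_add[OF carrier_mat_triv cm]) auto

lemma trans_minus: "dim_row A = dim_row B \<Longrightarrow> dim_col A = dim_col B \<Longrightarrow>
  transpose_mat (A - B) = transpose_mat A - transpose_mat (B :: 'a :: ab_group_add mat)"
  by (rule transpose_minus[OF carrier_mat_triv cm]) auto

lemma trans_smult: "transpose_mat (k \<cdot>\<^sub>m A) = k \<cdot>\<^sub>m transpose_mat A"
  by (intro eq_matI) auto

lemma smult_one_l: "(k \<cdot>\<^sub>m 1\<^sub>m (dim_row A)) * A = (k :: 'a :: comm_ring_1) \<cdot>\<^sub>m A"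
  by (subst smult_l) auto

lemma smult_one_r: "A * (k \<cdot>\<^sub>m 1\<^sub>m (dim_col A)) = (k :: 'a :: comm_ring_1) \<cdot>\<^sub>m A"
  by (subst smult_r) auto

lemmas mtk = massoc mtrans smult_l smult_r dist_l dist_r distm_l distm_r trans_add trans_minus trans_smult



lemma pow_carrier[simp]: "N \<in> carrier_mat k k \<Longrightarrow> N ^\<^sub>m j \<in> carrier_mat k k"
  by (intro carrier_matI) auto

lemma pow_Suc_left: assumes N: "N \<in> carrier_mat k k" shows "N ^\<^sub>m Suc j = N * N ^\<^sub>m j"
proof (induction j)
  case 0 thus ?case using N by simp
next
  case (Suc j)
  have dN: "dim_row N = k" "dim_col N = k" using N by auto
  have "N ^\<^sub>m Suc (Suc j) = (N * N ^\<^sub>m j) * N" using Suc by simp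
  also have "\<dots> = N * (N ^\<^sub>m j * N)" by (subst massoc) (auto simp: dN)
  finally show ?case by simp
qed

lemma pow_add: assumes N: "N \<in> carrier_mat k k" shows "N ^\<^sub>m (a + b) = N ^\<^sub>m a * N ^\<^sub>m b"
proof (induction b)
  case 0 thus ?case using N by simp
next
  case (Suc b)
  have dN: "dim_row N = k" "dim_col N = k" using N by auto
  have "N ^\<^sub>m (a + Suc b) = (N ^\<^sub>m a * N ^\<^sub>m b) * N" using Suc by simp
  also have "\<dots> = N ^\<^sub>m a * (N ^\<^sub>m b * N)" by (subst massoc) (auto simp: dN)
  finally show ?case by simp
qed

lemma pow_comm: assumes N: "N \<in> carrier_mat k k" and Y: "Y \<in> carrier_mat k k" and c: "Y * N = N * Y"
  shows "Y * N ^\<^sub>m j = N ^\<^sub>m j * Y"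
proof (induction j)
  case 0 thus ?case using N Y by simp
next
  case (Suc j)
  have dN: "dim_row N = k" "dim_col N = k" "dim_row Y = k" "dim_col Y = k" using N Y by auto
  have "Y * N ^\<^sub>m Suc j = (Y * N ^\<^sub>m j) * N" by (simp add: massoc dN)
  also have "\<dots> = N ^\<^sub>m j * (Y * N)" using Suc by (simp add: massoc dN)
  also have "\<dots> = N ^\<^sub>m j * N * Y" using c by (simp add: massoc dN)
  finally show ?case by simp
qed

lemma pow_sym: fixes N :: "real mat" assumes N: "N \<in> carrier_mat k k" and s: "transpose_mat N = N"
  shows "transpose_mat (N ^\<^sub>m j) = N ^\<^sub>m j"
proof (induction j)
  case 0 thus ?case using N by simp
next
  case (Suc j)
  have dN: "dim_row N = k" "dim_col N = k" using N by auto
  have "transpose_mat (N ^\<^sub>m Suc j) = transpose_mat N * transpose_mat (N ^\<^sub>m j)"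
    by (simp add: mtrans dN)
  also have "\<dots> = N * N ^\<^sub>m j" using Suc s by simp
  also have "\<dots> = N ^\<^sub>m Suc j" using pow_Suc_left[OF N] by simp
  finally show ?case .
qed

definition SN :: "real mat \<Rightarrow> nat \<Rightarrow> real mat \<Rightarrow> bool" where
  "SN N k Y \<longleftrightarrow> Y \<in> carrier_mat k k \<and> transpose_mat Y = Y \<and> Y * N = N * Y"

fun qp :: "(nat \<Rightarrow> real) \<Rightarrow> nat \<Rightarrow> real mat \<Rightarrow> real mat" where
  "qp c 0 N = 0\<^sub>m (dim_row N) (dim_row N)"
| "qp c (Suc d) N = c 0 \<cdot>\<^sub>m 1\<^sub>m (dim_row N) + N * qp (\<lambda>i. c (Suc i)) d N"

lemma qp_carrier: "N \<in> carrier_mat k k \<Longrightarrow> qp c d N \<in> carrier_mat k k"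
  by (induction d arbitrary: c) auto

lemma qp_SN: assumes N: "N \<in> carrier_mat k k" and s: "transpose_mat N = N"
  shows "SN N k (qp c d N)"
proof (induction d arbitrary: c)
  case 0 thus ?case using N unfolding SN_def by auto
next
  case (Suc d)
  let ?q = "qp (\<lambda>i. c (Suc i)) d N"
  from Suc[of "\<lambda>i. c (Suc i)"] have q: "?q \<in> carrier_mat k k" "transpose_mat ?q = ?q" "?q * N = N * ?q"
    unfolding SN_def by auto
  have dN: "dim_row N = k" "dim_col N = k" "dim_row ?q = k" "dim_col ?q = k" using N q by auto
  have t: "transpose_mat (qp c (Suc d) N) = qp c (Suc d) N"
    using q s by (simp add: mtk dN)
  have "qp c (Suc d) N * N = c 0 \<cdot>\<^sub>m N + N * (N * ?q)"
    using q by (simp add: mtk dN)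
  also have "\<dots> = N * qp c (Suc d) N"
    using q by (simp add: mtk dN)
  finally show ?case using t N q unfolding SN_def by (simp add: dN)
qed



lemma qp_index: assumes N: "N \<in> carrier_mat k k" and a: "a < k" and b: "b < k"
  shows "qp c d N $$ (a,b) = (\<Sum>j<d. c j * (N ^\<^sub>m j) $$ (a,b))"
  using a b
proof (induction d arbitrary: c a b)
  case 0 thus ?case using N by simp
next
  case (Suc d)
  let ?q = "qp (\<lambda>i. c (Suc i)) d N"
  have q: "?q \<in> carrier_mat k k" by (rule qp_carrier[OF N])
  have dN: "dim_row N = k" "dim_col N = k" "dim_row ?q = k" "dim_col ?q = k" using N q by auto
  have "(N * ?q) $$ (a,b) = (\<Sum>l\<in>{0..<k}. N $$ (a,l) * ?q $$ (l,b))"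
    using Suc.prems dN by (simp add: scalar_prod_def)
  also have "\<dots> = (\<Sum>l\<in>{0..<k}. N $$ (a,l) * (\<Sum>j<d. c (Suc j) * (N ^\<^sub>m j) $$ (l,b)))"
    using Suc.IH[of _ b] Suc.prems by (intro sum.cong) auto
  also have "\<dots> = (\<Sum>j<d. c (Suc j) * (\<Sum>l\<in>{0..<k}. N $$ (a,l) * (N ^\<^sub>m j) $$ (l,b)))"
    by (simp add: sum_distrib_left sum_distrib_right mult_ac sum.swap[of _ "{0..<k}"])
  also have "\<dots> = (\<Sum>j<d. c (Suc j) * (N ^\<^sub>m Suc j) $$ (a,b))"
  proof (intro sum.cong refl)
    fix j
    have "(N ^\<^sub>m Suc j) $$ (a,b) = (N * N ^\<^sub>m j) $$ (a,b)" using pow_Suc_left[OF N] by simp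
    also have "\<dots> = (\<Sum>l\<in>{0..<k}. N $$ (a,l) * (N ^\<^sub>m j) $$ (l,b))"
      using Suc.prems dN N by (simp add: scalar_prod_def)
    finally show "c (Suc j) * (\<Sum>l\<in>{0..<k}. N $$ (a,l) * (N ^\<^sub>m j) $$ (l,b)) = c (Suc j) * (N ^\<^sub>m Suc j) $$ (a,b)"
      by simp
  qed
  finally have e: "(N * ?q) $$ (a,b) = (\<Sum>j<d. c (Suc j) * (N ^\<^sub>m Suc j) $$ (a,b))" .
  have "qp c (Suc d) N $$ (a,b) = c 0 * (1\<^sub>m k) $$ (a,b) + (N * ?q) $$ (a,b)"
    using Suc.prems dN by simp
  also have "\<dots> = (\<Sum>j<Suc d. c j * (N ^\<^sub>m j) $$ (a,b))"
    unfolding e sum.lessThan_Suc_shift using Suc.prems dN by simp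
  finally show ?case .
qed

lemma dep: assumes N: "N \<in> carrier_mat k k"
  shows "\<exists>c d. (\<exists>j<d. c j \<noteq> 0) \<and> qp c d N = 0\<^sub>m k k"
proof -
  define K where "K = k * k"
  define D where "D = Suc K"
  define Big :: "real mat" where "Big = mat D D (\<lambda>(i,j). if i < K then (N ^\<^sub>m j) $$ (i div k, i mod k) else 0)"
  have Bc: "Big \<in> carrier_mat D D" unfolding Big_def by simp
  have BT: "transpose_mat Big \<in> carrier_mat D D" using Bc by simp
  have KD: "K < D" unfolding D_def by simp
  have "transpose_mat Big *\<^sub>v unit_vec D K = 0\<^sub>v D"
  proof (rule eq_vecI)
    fix j assume "j < dim_vec (0\<^sub>v D :: real vec)"
    hence j: "j < D" by simp
    have "(transpose_mat Big *\<^sub>v unit_vec D K) $ j = transpose_mat Big $$ (j, K)"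
      by (rule mult_unit_index[OF BT j KD])
    also have "\<dots> = 0" using j KD Bc unfolding Big_def by simp
    finally show "(transpose_mat Big *\<^sub>v unit_vec D K) $ j = 0\<^sub>v D $ j" using j by simp
  qed (use BT in simp)
  moreover have "unit_vec D K \<noteq> (0\<^sub>v D :: real vec)"
  proof
    assume "unit_vec D K = (0\<^sub>v D :: real vec)"
    hence "unit_vec D K $ K = (0\<^sub>v D :: real vec) $ K" by simp
    thus False using KD by simp
  qed
  ultimately have "det (transpose_mat Big) = 0"
    using det_0_iff_vec_prod_zero_field[OF BT] unit_vec_carrier[of D K] by blast
  hence "det Big = 0" using det_transpose[OF Bc] by simp
  then obtain v where v: "v \<in> carrier_vec D" "v \<noteq> 0\<^sub>v D" "Big *\<^sub>v v = 0\<^sub>v D"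
    using det_0_iff_vec_prod_zero_field[OF Bc] by auto
  define c where "c = (\<lambda>j. v $ j)"
  have nz: "\<exists>j<D. c j \<noteq> 0"
  proof (rule ccontr)
    assume "\<not> (\<exists>j<D. c j \<noteq> 0)"
    hence "v = 0\<^sub>v D" using v(1) unfolding c_def by (intro eq_vecI) auto
    thus False using v(2) by simp
  qed
  have "qp c D N = 0\<^sub>m k k"
  proof (rule eq_matI)
    fix a b assume a: "a < dim_row (0\<^sub>m k k :: real mat)" and b: "b < dim_col (0\<^sub>m k k :: real mat)"
    hence a: "a < k" and b: "b < k" by auto
    define i where "i = a * k + b"
    have ik: "i < K" unfolding i_def K_def
    proof -
      have "a * k + b < a * k + k" using b by simp
      also have "\<dots> = (a + 1) * k" by simp
      also have "\<dots> \<le> k * k" using a by (intro mult_right_mono) auto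
      finally show "a * k + b < k * k" .
    qed
    have idiv: "i div k = a" "i mod k = b" unfolding i_def using b by auto
    have "0 = (Big *\<^sub>v v) $ i" using v(3) ik KD by simp
    also have "\<dots> = (\<Sum>j\<in>{0..<D}. Big $$ (i,j) * v $ j)"
      using Bc v(1) ik KD by (simp add: scalar_prod_def)
    also have "\<dots> = (\<Sum>j<D. c j * (N ^\<^sub>m j) $$ (a,b))"
      unfolding c_def Big_def using ik KD idiv by (auto intro!: sum.cong simp: mult.commute atLeast0LessThan)
    also have "\<dots> = qp c D N $$ (a,b)" using qp_index[OF N a b] by simp
    finally show "qp c D N $$ (a, b) = 0\<^sub>m k k $$ (a, b)" using a b by simp
  qed (use qp_carrier[OF N] in auto)
  thus ?thesis using nz by blast
qed



lemma trick: assumes N: "N \<in> carrier_mat k k" and s: "transpose_mat N = N"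
  and U: "SN N k U"
  shows "N ^\<^sub>m e * U = 0\<^sub>m k k \<Longrightarrow> N * U = 0\<^sub>m k k"
proof (induction e rule: less_induct)
  case (less e)
  have Uc: "U \<in> carrier_mat k k" and Ut: "transpose_mat U = U" and UN: "U * N = N * U"
    using U unfolding SN_def by auto
  have dN: "dim_row N = k" "dim_col N = k" "dim_row U = k" "dim_col U = k" using N Uc by auto
  show ?case
  proof (cases e)
    case 0
    with less.prems have "U = 0\<^sub>m k k" using Uc by (simp add: dN)
    thus ?thesis using N by simp
  next
    case (Suc e1)
    show ?thesis
    proof (cases e1)
      case 0
      with Suc less.prems show ?thesis using N by simp
    next
      case (Suc e2)
      define a where "a = Suc e2"
      define V where "V = N ^\<^sub>m a * U"
      have Vc: "V \<in> carrier_mat k k" unfolding V_def using N Uc by (intro carrier_matI) (auto simp: dN)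
      have pa: "transpose_mat (N ^\<^sub>m a) = N ^\<^sub>m a" by (rule pow_sym[OF N s])
      have ca: "U * N ^\<^sub>m a = N ^\<^sub>m a * U" by (rule pow_comm[OF N Uc UN])
      have Vt: "transpose_mat V = V" unfolding V_def
        by (simp add: mtrans dN pa Ut ca)
      have pe: "N ^\<^sub>m a * N ^\<^sub>m a = N ^\<^sub>m e2 * N ^\<^sub>m e"
        using pow_add[OF N, of a a] pow_add[OF N, of e2 e] unfolding a_def \<open>e = Suc e1\<close> \<open>e1 = Suc e2\<close>
        by (simp add: add.commute)
      have "transpose_mat V * V = N ^\<^sub>m a * (U * N ^\<^sub>m a) * U"
        unfolding Vt unfolding V_def by (simp add: massoc dN)
      also have "\<dots> = (N ^\<^sub>m a * N ^\<^sub>m a) * U * U"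
        unfolding ca by (simp add: massoc dN)
      also have "\<dots> = N ^\<^sub>m e2 * (N ^\<^sub>m e * U) * U"
        unfolding pe by (simp add: massoc dN)
      also have "\<dots> = 0\<^sub>m k k" unfolding less.prems using N Uc by (simp add: dN)
      finally have "V = 0\<^sub>m k k" using ZtZ[OF Vc] by simp
      hence "N ^\<^sub>m a * U = 0\<^sub>m k k" unfolding V_def .
      moreover have "a < e" unfolding a_def using Suc \<open>e = Suc e1\<close> by simp
      ultimately show ?thesis using less.IH by blast
    qed
  qed
qed

lemma Y0_aux: assumes N: "N \<in> carrier_mat k k" and s: "transpose_mat N = N"
  shows "\<forall>c e. N ^\<^sub>m e * qp c d N = 0\<^sub>m k k \<longrightarrow> (\<exists>j<d. c j \<noteq> 0) \<longrightarrow> (\<exists>Y. SN N k Y \<and> N * N * Y = N)"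
proof (induction d)
  case 0 thus ?case by simp
next
  case (Suc d)
  show ?case
  proof (intro allI impI)
    fix c e assume z: "N ^\<^sub>m e * qp c (Suc d) N = 0\<^sub>m k k" and nz: "\<exists>j<Suc d. c j \<noteq> 0"
    let ?q = "qp (\<lambda>i. c (Suc i)) d N"
    have q: "SN N k ?q" by (rule qp_SN[OF N s])
    have qc: "?q \<in> carrier_mat k k" using q unfolding SN_def by auto
    have dN: "dim_row N = k" "dim_col N = k" "dim_row ?q = k" "dim_col ?q = k" using N qc by auto
    show "\<exists>Y. SN N k Y \<and> N * N * Y = N"
    proof (cases "c 0 = 0")
      case True
      have "qp c (Suc d) N = N * ?q" using True by (intro eq_matI) (auto simp: dN)
      hence "N ^\<^sub>m e * (N * ?q) = 0\<^sub>m k k" using z by simp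
      hence "N ^\<^sub>m Suc e * ?q = 0\<^sub>m k k" by (simp add: massoc dN)
      moreover have "\<exists>j<d. c (Suc j) \<noteq> 0" using nz True by (metis less_Suc_eq_0_disj)
      ultimately show ?thesis using Suc.IH by blast
    next
      case False
      have "N * qp c (Suc d) N = 0\<^sub>m k k"
        by (rule trick[OF N s qp_SN[OF N s] z])
      hence e0: "c 0 \<cdot>\<^sub>m N + N * (N * ?q) = 0\<^sub>m k k" by (simp add: mtk dN)
      define Y where "Y = (- 1 / c 0) \<cdot>\<^sub>m ?q"
      have "SN N k Y" using q unfolding SN_def Y_def by (auto simp: mtk dN)
      moreover have "N * N * Y = N"
      proof (rule eq_matI)
        fix i j assume i: "i < dim_row N" and j: "j < dim_col N"
        have "(c 0 \<cdot>\<^sub>m N + N * (N * ?q)) $$ (i,j) = 0" using e0 i j by (simp add: dN)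
        hence "c 0 * N $$ (i,j) + (N * (N * ?q)) $$ (i,j) = 0" using i j by (simp add: dN)
        moreover have "(N * N * Y) $$ (i,j) = (- 1 / c 0) * (N * (N * ?q)) $$ (i,j)"
          unfolding Y_def using i j by (simp add: mtk dN)
        ultimately have "c 0 * (N * N * Y) $$ (i,j) = c 0 * N $$ (i,j)" using False by (simp add: field_simps)
        thus "(N * N * Y) $$ (i,j) = N $$ (i,j)" using False by simp
      qed (simp_all add: Y_def dN)
      ultimately show ?thesis by blast
    qed
  qed
qed

lemma Y0_exists: assumes N: "N \<in> carrier_mat k k" and s: "transpose_mat N = N"
  shows "\<exists>Y. SN N k Y \<and> N * N * Y = N"
proof -
  obtain c d where nz: "\<exists>j<d. c j \<noteq> 0" and z: "qp c d N = 0\<^sub>m k k" using dep[OF N] by blast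
  have "N ^\<^sub>m 0 * qp c d N = 0\<^sub>m k k" using z N by simp
  thus ?thesis using Y0_aux[OF N s] nz by blast
qed



definition mpp :: "real mat \<Rightarrow> real mat \<Rightarrow> bool" where
  "mpp M X \<longleftrightarrow> X \<in> carrier_mat (dim_col M) (dim_row M) \<and> M * X * M = M \<and> X * M * X = X \<and>
      transpose_mat (M * X) = M * X \<and> transpose_mat (X * M) = X * M"

lemma mp_unique: assumes X: "mpp M X" and Y: "mpp M Y" shows "X = Y"
proof -
  have d: "dim_row X = dim_col M" "dim_col X = dim_row M" "dim_row Y = dim_col M" "dim_col Y = dim_row M"
    using X Y unfolding mpp_def by auto
  from X have x1: "M * X * M = M" and x2: "X * M * X = X" and x3: "transpose_mat (M * X) = M * X"
    and x4: "transpose_mat (X * M) = X * M" unfolding mpp_def by auto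
  from Y have y1: "M * Y * M = M" and y2: "Y * M * Y = Y" and y3: "transpose_mat (M * Y) = M * Y"
    and y4: "transpose_mat (Y * M) = Y * M" unfolding mpp_def by auto
  have s2X: "transpose_mat X * transpose_mat M = M * X" using x3 by (simp add: mtrans d)
  have s2Y: "transpose_mat Y * transpose_mat M = M * Y" using y3 by (simp add: mtrans d)
  have t2X: "transpose_mat M * transpose_mat X = X * M" using x4 by (simp add: mtrans d)
  have t2Y: "transpose_mat M * transpose_mat Y = Y * M" using y4 by (simp add: mtrans d)
  have s3: "transpose_mat M = transpose_mat M * (transpose_mat Y * transpose_mat M)"
  proof -
    have "transpose_mat M = transpose_mat (M * Y * M)" using y1 by simp
    also have "\<dots> = transpose_mat M * (transpose_mat Y * transpose_mat M)" by (simp add: mtrans d)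
    finally show ?thesis .
  qed
  have s3': "transpose_mat M = (transpose_mat M * transpose_mat X) * transpose_mat M"
  proof -
    have "transpose_mat M = transpose_mat (M * X * M)" using x1 by simp
    also have "\<dots> = (transpose_mat M * transpose_mat X) * transpose_mat M" by (simp add: mtrans d massoc)
    finally show ?thesis .
  qed
  have "X = X * (M * X)" using x2 by (simp add: massoc d)
  also have "\<dots> = X * (transpose_mat X * transpose_mat M)" using s2X by simp
  also have "\<dots> = X * (transpose_mat X * (transpose_mat M * (transpose_mat Y * transpose_mat M)))"
    using s3 by simp
  also have "\<dots> = X * ((transpose_mat X * transpose_mat M) * (transpose_mat Y * transpose_mat M))"
    by (simp add: massoc d)
  also have "\<dots> = X * ((M * X) * (M * Y))" unfolding s2X s2Y ..
  also have "\<dots> = (X * M * X) * M * Y" by (simp add: massoc d)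
  also have "\<dots> = X * M * Y" unfolding x2 ..
  finally have ex: "X = X * M * Y" .
  have "Y = (Y * M) * Y" using y2 by simp
  also have "\<dots> = (transpose_mat M * transpose_mat Y) * Y" using t2Y by simp
  also have "\<dots> = (((transpose_mat M * transpose_mat X) * transpose_mat M) * transpose_mat Y) * Y"
    using s3' by simp
  also have "\<dots> = ((transpose_mat M * transpose_mat X) * (transpose_mat M * transpose_mat Y)) * Y"
    by (simp add: massoc d)
  also have "\<dots> = ((X * M) * (Y * M)) * Y" unfolding t2X t2Y ..
  also have "\<dots> = X * M * (Y * M * Y)" by (simp add: massoc d)
  also have "\<dots> = X * M * Y" unfolding y2 ..
  finally show ?thesis using ex by simp
qed

lemma minus_eq0: assumes "A \<in> carrier_mat r c" "B \<in> carrier_mat r c" "A - B = 0\<^sub>m r c"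
  shows "A = (B :: real mat)"
proof (rule eq_matI)
  fix i j assume ij: "i < dim_row B" "j < dim_col B"
  have ir: "i < r" "j < c" using assms(2) ij by auto
  have "(A - B) $$ (i,j) = 0" using assms(3) ir by simp
  moreover have "(A - B) $$ (i,j) = A $$ (i,j) - B $$ (i,j)" using ij by simp
  ultimately show "A $$ (i,j) = B $$ (i,j)" by simp
qed (use assms in auto)

lemma mp_exists: assumes M: "M \<in> carrier_mat m n" shows "\<exists>X. mpp M X"
proof -
  define N where "N = transpose_mat M * M"
  have dM: "dim_row M = m" "dim_col M = n" using M by auto
  have Nc: "N \<in> carrier_mat n n" unfolding N_def using M by (intro carrier_matI) auto
  have dN: "dim_row N = n" "dim_col N = n" using Nc by auto
  have Ns: "transpose_mat N = N" unfolding N_def by (simp add: mtrans dM)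
  obtain Y0 where Y0: "SN N n Y0" and NNY: "N * N * Y0 = N" using Y0_exists[OF Nc Ns] by blast
  have Y0c: "Y0 \<in> carrier_mat n n" and Y0t: "transpose_mat Y0 = Y0" and Y0N: "Y0 * N = N * Y0"
    using Y0 unfolding SN_def by auto
  have d0: "dim_row Y0 = n" "dim_col Y0 = n" using Y0c by auto
  have NYN: "N * (Y0 * N) = N" using NNY Y0N by (simp add: massoc d0 dN)
  have NYN': "N * (Y0 * (N * Z)) = N * Z" if "dim_row Z = n" for Z
  proof -
    have "N * (Y0 * (N * Z)) = (N * (Y0 * N)) * Z" using that by (simp add: massoc d0 dN)
    thus ?thesis unfolding NYN .
  qed
  define Y where "Y = Y0 * N * Y0"
  have Yc: "Y \<in> carrier_mat n n" unfolding Y_def by (intro carrier_matI) (auto simp: d0 dN)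
  have dY: "dim_row Y = n" "dim_col Y = n" using Yc by auto
  have Yt: "transpose_mat Y = Y" unfolding Y_def by (simp add: mtrans d0 dN Y0t Ns massoc)
  have NYN2: "N * Y * N = N" unfolding Y_def by (simp add: massoc d0 dN NYN' NYN)
  have YNY: "Y * N * Y = Y" unfolding Y_def by (simp add: massoc d0 dN NYN' NYN)
  have YN: "Y * N = N * Y"
  proof -
    have "Y * N = Y0 * N" unfolding Y_def by (simp add: massoc d0 dN NYN)
    moreover have "N * Y = N * Y0" unfolding Y_def by (simp add: massoc d0 dN NYN')
    ultimately show ?thesis using Y0N by simp
  qed
  define X where "X = Y * transpose_mat M"
  have Xc: "X \<in> carrier_mat n m" unfolding X_def by (intro carrier_matI) (auto simp: dY dM)
  define U where "U = Y * N - 1\<^sub>m n"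
  have Uc: "U \<in> carrier_mat n n" unfolding U_def by (intro carrier_matI) (auto simp: dY dN)
  have "N * U = N * Y * N - N" unfolding U_def by (simp add: mtk dY dN)
  hence NU: "N * U = 0\<^sub>m n n" unfolding NYN2 using Nc by simp
  have MUc: "M * U \<in> carrier_mat m n" using M Uc by (intro carrier_matI) auto
  have "transpose_mat (M * U) * (M * U) = transpose_mat U * (N * U)"
    unfolding N_def using Uc by (simp add: mtk dM)
  also have "\<dots> = 0\<^sub>m n n" unfolding NU using Uc by simp
  finally have "M * U = 0\<^sub>m m n" by (rule ZtZ[OF MUc])
  hence "M * (Y * N) - M = 0\<^sub>m m n" unfolding U_def by (simp add: mtk dY dN dM)
  moreover have "M * (Y * N) \<in> carrier_mat m n" by (intro carrier_matI) (auto simp: dY dN dM)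
  ultimately have MYN: "M * (Y * N) = M" using minus_eq0[of "M * (Y * N)" m n M] M by blast
  have "mpp M X" unfolding mpp_def
  proof (intro conjI)
    show "X \<in> carrier_mat (dim_col M) (dim_row M)" using Xc dM by simp
    show "M * X * M = M" unfolding X_def using MYN unfolding N_def by (simp add: massoc dY dM)
    have YNY': "Y * (transpose_mat M * (M * Y)) = Y" using YNY unfolding N_def by (simp add: massoc dY dM)
    have "Y * (transpose_mat M * (M * (Y * transpose_mat M))) = (Y * (transpose_mat M * (M * Y))) * transpose_mat M"
      by (simp add: massoc dY dM)
    thus "X * M * X = X" unfolding X_def YNY' by (simp add: massoc dY dM)
    show "transpose_mat (M * X) = M * X" unfolding X_def by (simp add: mtrans massoc dY dM Yt)
    show "transpose_mat (X * M) = X * M" unfolding X_def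
      using YN unfolding N_def by (simp add: mtrans massoc dY dM Yt)
  qed
  thus ?thesis by blast
qed

lemma mp_props: assumes M: "M \<in> carrier_mat m n" shows "mpp M (mp_inverse M)"
proof -
  obtain X where X: "mpp M X" using mp_exists[OF M] by blast
  have "(THE X. mpp M X) = X" using X mp_unique by blast
  moreover have "mp_inverse M = (THE X. mpp M X)" unfolding mp_inverse_def mpp_def ..
  ultimately show ?thesis using X by simp
qed



lemma vminus0: assumes "a \<in> carrier_vec k" "b \<in> carrier_vec k" "a - b = 0\<^sub>v k"
  shows "a = (b :: real vec)"
proof (rule eq_vecI)
  fix i assume i: "i < dim_vec b"
  hence ik: "i < k" using assms by auto
  have "(a - b) $ i = 0" using assms(3) ik by simp
  moreover have "(a - b) $ i = a $ i - b $ i" using i by simp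
  ultimately show "a $ i = b $ i" by simp
qed (use assms in auto)

lemma mpp_dims: "mpp P X \<Longrightarrow> P \<in> carrier_mat r c \<Longrightarrow> X \<in> carrier_mat c r"
  unfolding mpp_def by auto

lemma mp_kill: assumes X: "mpp P X" and P: "P \<in> carrier_mat r c" and x: "x \<in> carrier_vec c"
  shows "x - X *\<^sub>v (P *\<^sub>v x) \<in> null_mat P"
proof -
  have Xc: "X \<in> carrier_mat c r" using mpp_dims[OF X P] .
  have PXP: "P * X * P = P" using X unfolding mpp_def by auto
  have "P *\<^sub>v (X *\<^sub>v (P *\<^sub>v x)) = (P * X * P) *\<^sub>v x"
    using P Xc x by (simp add: massoc_v)
  hence e: "P *\<^sub>v (X *\<^sub>v (P *\<^sub>v x)) = P *\<^sub>v x" unfolding PXP .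
  have "P *\<^sub>v (x - X *\<^sub>v (P *\<^sub>v x)) = P *\<^sub>v x - P *\<^sub>v (X *\<^sub>v (P *\<^sub>v x))"
    using P Xc x by (subst mult_minus_distrib_mat_vec[of _ r c]) auto
  also have "\<dots> = 0\<^sub>v r" unfolding e using P x by simp
  finally show ?thesis unfolding null_mat_def using P Xc x by auto
qed

lemma null_kill_eq: assumes X: "mpp P X" and P: "P \<in> carrier_mat r c"
  and B: "B \<in> carrier_mat r' c" and nl: "null_mat P \<subseteq> null_mat B"
  shows "B * (X * P) = B"
proof (rule mat_eq_vecI)
  have Xc: "X \<in> carrier_mat c r" using mpp_dims[OF X P] .
  show "B * (X * P) \<in> carrier_mat r' c" using B Xc P by (intro carrier_matI) auto
  show "B \<in> carrier_mat r' c" by fact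
  fix x :: "real vec" assume x: "x \<in> carrier_vec c"
  have "x - X *\<^sub>v (P *\<^sub>v x) \<in> null_mat B" using mp_kill[OF X P x] nl by auto
  hence "B *\<^sub>v (x - X *\<^sub>v (P *\<^sub>v x)) = 0\<^sub>v r'" unfolding null_mat_def using B by auto
  moreover have "B *\<^sub>v (x - X *\<^sub>v (P *\<^sub>v x)) = B *\<^sub>v x - B *\<^sub>v (X *\<^sub>v (P *\<^sub>v x))"
    using B Xc P x by (subst mult_minus_distrib_mat_vec[of _ r' c]) auto
  ultimately have "B *\<^sub>v x = B *\<^sub>v (X *\<^sub>v (P *\<^sub>v x))"
    using vminus0[of "B *\<^sub>v x" r' "B *\<^sub>v (X *\<^sub>v (P *\<^sub>v x))"] B Xc P x by auto
  thus "B * (X * P) *\<^sub>v x = B *\<^sub>v x" using B Xc P x by (simp add: massoc_v)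
qed

lemma range_fix_eq: assumes Z: "mpp M Z" and M: "M \<in> carrier_mat r c"
  and B: "B \<in> carrier_mat r c'" and rg: "range_mat B \<subseteq> range_mat M"
  shows "(M * Z) * B = B"
proof (rule mat_eq_vecI)
  have Zc: "Z \<in> carrier_mat c r" using mpp_dims[OF Z M] .
  show "M * Z * B \<in> carrier_mat r c'" using B Zc M by (intro carrier_matI) auto
  show "B \<in> carrier_mat r c'" by fact
  fix x :: "real vec" assume x: "x \<in> carrier_vec c'"
  have "B *\<^sub>v x \<in> range_mat B" unfolding range_mat_def using x B by auto
  hence "B *\<^sub>v x \<in> range_mat M" using rg by auto
  then obtain y where y: "y \<in> carrier_vec c" "B *\<^sub>v x = M *\<^sub>v y" unfolding range_mat_def using M by auto
  have MZM: "M * Z * M = M" using Z unfolding mpp_def by auto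
  have "M * Z * B *\<^sub>v x = M *\<^sub>v (Z *\<^sub>v (M *\<^sub>v y))" using B Zc M x y by (simp add: massoc_v)
  also have "\<dots> = (M * Z * M) *\<^sub>v y" using Zc M y by (simp add: massoc_v)
  finally show "M * Z * B *\<^sub>v x = B *\<^sub>v x" unfolding MZM y(2) .
qed



lemma inj_inv: assumes F: "(F :: real mat) \<in> carrier_mat k k"
  and inj: "\<And>x. x \<in> carrier_vec k \<Longrightarrow> F *\<^sub>v x = 0\<^sub>v k \<Longrightarrow> x = 0\<^sub>v k"
  shows "\<exists>B. B \<in> carrier_mat k k \<and> F * B = 1\<^sub>m k"
proof -
  have "det F \<noteq> 0" using det_0_iff_vec_prod_zero_field[OF F] inj by auto
  from det_non_zero_imp_unit[OF F this, of "()"]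
  show ?thesis unfolding Units_def by (auto simp: ring_mat_simps)
qed

lemma range_incl:
  assumes A: "A \<in> carrier_mat m n" and E: "E \<in> carrier_mat m m" and P: "P \<in> carrier_mat m n"
    and X: "mpp P X" and rPA: "range_mat P = range_mat A"
    and Einj: "\<And>x. x \<in> carrier_vec m \<Longrightarrow> E *\<^sub>v x = 0\<^sub>v m \<Longrightarrow> x = 0\<^sub>v m"
    and Epres: "\<And>y. y \<in> range_mat A \<Longrightarrow> E *\<^sub>v y \<in> range_mat A"
  shows "range_mat A \<subseteq> range_mat (E * A)"
proof
  have Xc: "X \<in> carrier_mat n m" using mpp_dims[OF X P] .
  have PXP: "P * X * P = P" using X unfolding mpp_def by auto
  define Pi where "Pi = P * X"
  have Pic: "Pi \<in> carrier_mat m m" unfolding Pi_def using P Xc by (intro carrier_matI) auto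
  have Pifix: "Pi *\<^sub>v y = y" if "y \<in> range_mat A" for y
  proof -
    from that rPA obtain x0 where x0: "x0 \<in> carrier_vec n" "y = P *\<^sub>v x0" unfolding range_mat_def using P by auto
    have "Pi *\<^sub>v y = (P * X * P) *\<^sub>v x0" unfolding Pi_def x0(2) using P Xc x0 by (simp add: massoc_v)
    thus ?thesis unfolding PXP x0(2) .
  qed
  have Piin: "Pi *\<^sub>v z \<in> range_mat A" if "z \<in> carrier_vec m" for z
  proof -
    have "Pi *\<^sub>v z = P *\<^sub>v (X *\<^sub>v z)" unfolding Pi_def using P Xc that by (simp add: massoc_v)
    moreover have "X *\<^sub>v z \<in> carrier_vec n" using Xc that by auto
    ultimately have "Pi *\<^sub>v z \<in> range_mat P" unfolding range_mat_def using P by auto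
    thus ?thesis using rPA by simp
  qed
  have rgc: "y \<in> carrier_vec m" if "y \<in> range_mat A" for y using that A unfolding range_mat_def by auto
  define F where "F = E * Pi + (1\<^sub>m m - Pi)"
  have Fc: "F \<in> carrier_mat m m" unfolding F_def using E Pic by (intro carrier_matI) auto
  have key: "Pi *\<^sub>v (F *\<^sub>v x) = E *\<^sub>v (Pi *\<^sub>v x)" and Fx: "F *\<^sub>v x = E *\<^sub>v (Pi *\<^sub>v x) + (x - Pi *\<^sub>v x)"
    if x: "x \<in> carrier_vec m" for x
  proof -
    define u where "u = Pi *\<^sub>v x"
    have uc: "u \<in> carrier_vec m" unfolding u_def using Pic x by auto
    have uA: "u \<in> range_mat A" unfolding u_def by (rule Piin[OF x])
    have Eu: "E *\<^sub>v u \<in> range_mat A" by (rule Epres[OF uA])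
    have Euc: "E *\<^sub>v u \<in> carrier_vec m" using E uc by auto
    have EPc: "E * Pi \<in> carrier_mat m m" using E Pic by (intro carrier_matI) auto
    have IPc: "1\<^sub>m m - Pi \<in> carrier_mat m m" using Pic by (intro carrier_matI) auto
    have "F *\<^sub>v x = (E * Pi) *\<^sub>v x + (1\<^sub>m m - Pi) *\<^sub>v x"
      unfolding F_def by (rule add_mult_distrib_mat_vec[OF EPc IPc x])
    also have "(1\<^sub>m m - Pi) *\<^sub>v x = 1\<^sub>m m *\<^sub>v x - Pi *\<^sub>v x"
      by (rule minus_mult_distrib_mat_vec[OF one_carrier_mat Pic x])
    also have "(E * Pi) *\<^sub>v x = E *\<^sub>v (Pi *\<^sub>v x)" using E Pic x by (simp add: massoc_v)
    finally show Fx': "F *\<^sub>v x = E *\<^sub>v (Pi *\<^sub>v x) + (x - Pi *\<^sub>v x)" using x by simp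
    have "Pi *\<^sub>v (F *\<^sub>v x) = Pi *\<^sub>v (E *\<^sub>v u) + (u - Pi *\<^sub>v u)"
      unfolding Fx' u_def[symmetric] using Pic Euc x uc
      by (simp add: mult_add_distrib_mat_vec[of _ m m] mult_minus_distrib_mat_vec[of _ m m] u_def[symmetric])
    also have "\<dots> = E *\<^sub>v u" unfolding Pifix[OF Eu] Pifix[OF uA] using Euc uc by simp
    finally show "Pi *\<^sub>v (F *\<^sub>v x) = E *\<^sub>v (Pi *\<^sub>v x)" unfolding u_def .
  qed
  have Finj: "x = 0\<^sub>v m" if x: "x \<in> carrier_vec m" and z: "F *\<^sub>v x = 0\<^sub>v m" for x
  proof -
    have P0: "Pi *\<^sub>v 0\<^sub>v m = 0\<^sub>v m" using Pic by (intro eq_vecI) (auto simp: scalar_prod_def)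
    have "E *\<^sub>v (Pi *\<^sub>v x) = 0\<^sub>v m" using key[OF x] z P0 by simp
    hence u0: "Pi *\<^sub>v x = 0\<^sub>v m" using Einj Pic x by auto
    have E0: "E *\<^sub>v 0\<^sub>v m = 0\<^sub>v m" using E by (intro eq_vecI) (auto simp: scalar_prod_def)
    have "F *\<^sub>v x = x" unfolding Fx[OF x] u0 E0 using x by simp
    thus ?thesis using z by simp
  qed
  obtain B where B: "B \<in> carrier_mat m m" "F * B = 1\<^sub>m m" using inj_inv[OF Fc Finj] by blast
  fix y assume y: "y \<in> range_mat A"
  have yc: "y \<in> carrier_vec m" by (rule rgc[OF y])
  define x where "x = B *\<^sub>v y"
  have xc: "x \<in> carrier_vec m" unfolding x_def using B yc by auto
  have "(F * B) *\<^sub>v y = F *\<^sub>v x" unfolding x_def using Fc B yc by (intro massoc_v) auto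
  hence Fxy: "F *\<^sub>v x = y" using B yc by simp
  have "y = E *\<^sub>v (Pi *\<^sub>v x)" using key[OF xc] unfolding Fxy Pifix[OF y] .
  moreover obtain x1 where x1: "x1 \<in> carrier_vec n" "Pi *\<^sub>v x = A *\<^sub>v x1"
    using Piin[OF xc] A unfolding range_mat_def by auto
  moreover have "(E * A) *\<^sub>v x1 = E *\<^sub>v (A *\<^sub>v x1)" using E A x1 by (intro massoc_v) auto
  ultimately have "y = (E * A) *\<^sub>v x1" by simp
  moreover have "dim_col (E * A) = n" using A by simp
  ultimately show "y \<in> range_mat (E * A)" unfolding range_mat_def using x1 by auto
qed



lemma nn_mono: assumes M: "nonneg_mat M" "M \<in> carrier_mat r c" and ab: "a \<in> carrier_vec c" "b \<in> carrier_vec c"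
  "\<And>i. i < c \<Longrightarrow> a $ i \<le> b $ i" and i: "i < r"
  shows "(M *\<^sub>v a) $ i \<le> (M *\<^sub>v b) $ i"
proof -
  have "(M *\<^sub>v a) $ i = (\<Sum>l\<in>{0..<c}. M $$ (i,l) * a $ l)" using M ab i by (simp add: scalar_prod_def)
  also have "\<dots> \<le> (\<Sum>l\<in>{0..<c}. M $$ (i,l) * b $ l)"
  proof (rule sum_mono)
    fix l assume "l \<in> {0..<c}"
    hence "0 \<le> M $$ (i,l)" "a $ l \<le> b $ l" using M i ab unfolding nonneg_mat_def by auto
    thus "M $$ (i,l) * a $ l \<le> M $$ (i,l) * b $ l" by (rule mult_left_mono[rotated])
  qed
  also have "\<dots> = (M *\<^sub>v b) $ i" using M ab i by (simp add: scalar_prod_def)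
  finally show ?thesis .
qed

lemma nn_pos: assumes M: "nonneg_mat M" "M \<in> carrier_mat r c" and a: "a \<in> carrier_vec c"
  "\<And>i. i < c \<Longrightarrow> 0 \<le> a $ i" and i: "i < r"
  shows "0 \<le> (M *\<^sub>v a) $ i"
proof -
  have "(M *\<^sub>v a) $ i = (\<Sum>l\<in>{0..<c}. M $$ (i,l) * a $ l)" using M a i by (simp add: scalar_prod_def)
  also have "0 \<le> \<dots>" using M a i unfolding nonneg_mat_def by (intro sum_nonneg mult_nonneg_nonneg) auto
  finally show ?thesis .
qed

lemma nn_trans: "nonneg_mat M \<Longrightarrow> nonneg_mat (transpose_mat M)"
  unfolding nonneg_mat_def by auto

lemma tele:
  fixes G X2 Z Q :: "real mat" and w :: "real vec"
  assumes G: "G \<in> carrier_mat n n" and X2: "X2 \<in> carrier_mat n m" and Z: "Z \<in> carrier_mat n m"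
    and Q: "Q \<in> carrier_mat m n"
    and nX: "nonneg_mat X2" and nZ: "nonneg_mat Z" and nG: "nonneg_mat G"
    and ZG: "(1\<^sub>m n - G) * Z = X2" and GQ: "G = X2 * Q"
    and w: "w \<in> carrier_vec n" and w0: "\<And>i. i < n \<Longrightarrow> 0 \<le> w $ i"
    and sub: "\<And>i. i < n \<Longrightarrow> w $ i \<le> (transpose_mat G *\<^sub>v w) $ i"
  shows "w = 0\<^sub>v n"
proof -
  define H where "H = transpose_mat G"
  have Hc: "H \<in> carrier_mat n n" unfolding H_def using G by auto
  have nH: "nonneg_mat H" unfolding H_def by (rule nn_trans[OF nG])
  define u where "u = (\<lambda>k. (H ^\<^sub>m k) *\<^sub>v w)"
  have u0: "u 0 = w" unfolding u_def using Hc w by simp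
  have uS: "u (Suc k) = H *\<^sub>v u k" for k
    unfolding u_def pow_Suc_left[OF Hc] using Hc w by (simp add: massoc_v)
  have uc: "u k \<in> carrier_vec n" for k unfolding u_def using Hc by (intro carrier_vecI) auto
  have uge: "\<forall>i<n. w $ i \<le> u k $ i" for k
  proof (induction k)
    case 0 thus ?case unfolding u0 by simp
  next
    case (Suc k)
    show ?case
    proof (intro allI impI)
      fix i assume i: "i < n"
      have "w $ i \<le> (H *\<^sub>v w) $ i" using sub[OF i] unfolding H_def .
      also have "\<dots> \<le> (H *\<^sub>v u k) $ i" using nn_mono[OF nH Hc w uc] Suc i by auto
      finally show "w $ i \<le> u (Suc k) $ i" unfolding uS .
    qed
  qed
  have X2T: "transpose_mat X2 = transpose_mat Z - transpose_mat Z * H"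
  proof -
    have "transpose_mat X2 = transpose_mat Z * transpose_mat (1\<^sub>m n - G)"
      unfolding ZG[symmetric] using G Z by (simp add: mtrans)
    also have "transpose_mat (1\<^sub>m n - G) = 1\<^sub>m n - H" unfolding H_def using G by (simp add: trans_minus)
    also have "transpose_mat Z * (1\<^sub>m n - H) = transpose_mat Z - transpose_mat Z * H"
      using Z Hc by (simp add: distm_r)
    finally show ?thesis .
  qed
  have X2v: "transpose_mat X2 *\<^sub>v v = transpose_mat Z *\<^sub>v v - transpose_mat Z *\<^sub>v (H *\<^sub>v v)"
    if v: "v \<in> carrier_vec n" for v
  proof -
    have ZHc: "transpose_mat Z * H \<in> carrier_mat m n" using Z Hc by (intro carrier_matI) auto
    have "transpose_mat X2 *\<^sub>v v = (transpose_mat Z - transpose_mat Z * H) *\<^sub>v v" unfolding X2T ..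
    also have "\<dots> = transpose_mat Z *\<^sub>v v - (transpose_mat Z * H) *\<^sub>v v"
      using Z ZHc v by (intro minus_mult_distrib_mat_vec) auto
    also have "(transpose_mat Z * H) *\<^sub>v v = transpose_mat Z *\<^sub>v (H *\<^sub>v v)" using Z Hc v by (simp add: massoc_v)
    finally show ?thesis .
  qed
  have ZTc: "transpose_mat Z \<in> carrier_mat m n" using Z by auto
  have X2Tc: "transpose_mat X2 \<in> carrier_mat m n" using X2 by auto
  have nZT: "nonneg_mat (transpose_mat Z)" by (rule nn_trans[OF nZ])
  have nX2T: "nonneg_mat (transpose_mat X2)" by (rule nn_trans[OF nX])
  have X0: "(transpose_mat X2 *\<^sub>v w) $ j = 0" if j: "j < m" for j
  proof -
    define f where "f = (\<lambda>k. (transpose_mat Z *\<^sub>v u k) $ j)"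
    define c where "c = (transpose_mat X2 *\<^sub>v w) $ j"
    have c0: "0 \<le> c" unfolding c_def using nn_pos[OF nX2T X2Tc w w0 j] .
    have step: "(transpose_mat X2 *\<^sub>v u k) $ j = f k - f (Suc k)" for k
      unfolding f_def uS using X2v[OF uc[of k]] j Z Hc uc[of k] by simp
    have cle: "c \<le> f k - f (Suc k)" for k
      unfolding c_def step[symmetric] using nn_mono[OF nX2T X2Tc w uc[of k]] uge[of k] j by auto
    have fpos: "0 \<le> f k" for k
      unfolding f_def using nn_pos[OF nZT ZTc uc[of k]] uge[of k] w0 j by force
    have "real N * c \<le> f 0" for N
    proof -
      have "real N * c = (\<Sum>k<N. c)" by simp
      also have "\<dots> \<le> (\<Sum>k<N. f k - f (Suc k))" by (rule sum_mono) (rule cle)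
      also have "\<dots> = f 0 - f N" by (rule sum_lessThan_telescope')
      also have "\<dots> \<le> f 0" using fpos[of N] by simp
      finally show ?thesis .
    qed
    hence "c \<le> 0"
    proof -
      assume h: "\<And>N. real N * c \<le> f 0"
      show "c \<le> 0"
      proof (rule ccontr)
        assume "\<not> c \<le> 0" hence "0 < c" by simp
        then obtain N where "f 0 < real N * c" using ex_less_of_nat_mult by blast
        thus False using h[of N] by simp
      qed
    qed
    thus ?thesis using c0 unfolding c_def by simp
  qed
  have Hw: "H *\<^sub>v w = 0\<^sub>v n"
  proof -
    have "H = transpose_mat Q * transpose_mat X2" unfolding H_def GQ using X2 Q by (simp add: mtrans)
    hence "H *\<^sub>v w = transpose_mat Q *\<^sub>v (transpose_mat X2 *\<^sub>v w)" using X2 Q w by (simp add: massoc_v)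
    also have "transpose_mat X2 *\<^sub>v w = 0\<^sub>v m" using X0 X2 by (intro eq_vecI) auto
    also have "transpose_mat Q *\<^sub>v 0\<^sub>v m = 0\<^sub>v n" using Q by (intro eq_vecI) (auto simp: scalar_prod_def)
    finally show ?thesis .
  qed
  show ?thesis
  proof (rule eq_vecI)
    fix i assume "i < dim_vec (0\<^sub>v n :: real vec)"
    hence i: "i < n" by simp
    have "w $ i \<le> 0" using sub[OF i] Hw i unfolding H_def by simp
    thus "w $ i = 0\<^sub>v n $ i" using w0[OF i] i by simp
  qed (use w in simp)
qed



lemma sum_split_nat: "sum f {0..<a + b} = sum f {0..<a} + sum (\<lambda>j. f (a + j)) {0..<(b::nat)}"
  by (induction b) (auto simp: add.assoc)

lemma eig_transpose: assumes A: "A \<in> carrier_mat k k" and e: "eigenvalue A (l :: complex)"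
  shows "eigenvalue (transpose_mat A) l"
proof -
  have At: "transpose_mat A \<in> carrier_mat k k" using A by auto
  show ?thesis using e unfolding eigenvalue_root_char_poly[OF A] eigenvalue_root_char_poly[OF At]
    char_poly_transpose_mat[OF A] .
qed

lemma wT_index:
  fixes K L :: "real mat" and v :: "complex vec"
  assumes K: "K \<in> carrier_mat n n" and L: "L \<in> carrier_mat n n" and v: "v \<in> carrier_vec (n + n)"
    and i: "i < n"
  defines "W \<equiv> four_block_mat K L (1\<^sub>m n) (0\<^sub>m n n)"
  shows "(transpose_mat (map_mat complex_of_real W) *\<^sub>v v) $ i
           = (\<Sum>j\<in>{0..<n}. of_real (K $$ (j,i)) * v $ j) + v $ (n + i)"
    and "(transpose_mat (map_mat complex_of_real W) *\<^sub>v v) $ (n + i)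
           = (\<Sum>j\<in>{0..<n}. of_real (L $$ (j,i)) * v $ j)"
proof -
  have Wc: "W \<in> carrier_mat (n + n) (n + n)" unfolding W_def using K L by auto
  have dK: "dim_row K = n" "dim_col K = n" "dim_row L = n" "dim_col L = n" using K L by auto
  have gen: "(transpose_mat (map_mat complex_of_real W) *\<^sub>v v) $ p
     = (\<Sum>j\<in>{0..<n+n}. of_real (W $$ (j,p)) * v $ j)" if p: "p < n + n" for p
    using Wc v p by (simp add: scalar_prod_def)
  have "(\<Sum>j\<in>{0..<n+n}. of_real (W $$ (j,i)) * v $ j)
     = (\<Sum>j\<in>{0..<n}. of_real (W $$ (j,i)) * v $ j) + (\<Sum>j\<in>{0..<n}. of_real (W $$ (n + j,i)) * v $ (n + j))"
    by (rule sum_split_nat)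
  also have "(\<Sum>j\<in>{0..<n}. of_real (W $$ (j,i)) * v $ j) = (\<Sum>j\<in>{0..<n}. of_real (K $$ (j,i)) * v $ j)"
    unfolding W_def using i by (intro sum.cong) (auto simp: dK)
  also have "(\<Sum>j\<in>{0..<n}. of_real (W $$ (n + j,i)) * v $ (n + j)) = (\<Sum>j\<in>{0..<n}. (if j = i then v $ (n + i) else 0))"
    unfolding W_def using i by (intro sum.cong) (auto simp: dK)
  also have "\<dots> = v $ (n + i)" using i by simp
  finally show "(transpose_mat (map_mat complex_of_real W) *\<^sub>v v) $ i
           = (\<Sum>j\<in>{0..<n}. of_real (K $$ (j,i)) * v $ j) + v $ (n + i)" using gen[of i] i by simp
  have "(\<Sum>j\<in>{0..<n+n}. of_real (W $$ (j,n+i)) * v $ j)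
     = (\<Sum>j\<in>{0..<n}. of_real (W $$ (j,n+i)) * v $ j) + (\<Sum>j\<in>{0..<n}. of_real (W $$ (n + j,n+i)) * v $ (n + j))"
    by (rule sum_split_nat)
  also have "(\<Sum>j\<in>{0..<n}. of_real (W $$ (j,n+i)) * v $ j) = (\<Sum>j\<in>{0..<n}. of_real (L $$ (j,i)) * v $ j)"
    unfolding W_def using i by (intro sum.cong) (auto simp: dK)
  also have "(\<Sum>j\<in>{0..<n}. of_real (W $$ (n + j,n+i)) * v $ (n + j)) = 0"
    unfolding W_def using i by (intro sum.neutral) (auto simp: dK)
  finally show "(transpose_mat (map_mat complex_of_real W) *\<^sub>v v) $ (n + i)
           = (\<Sum>j\<in>{0..<n}. of_real (L $$ (j,i)) * v $ j)" using gen[of "n+i"] i by simp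
qed



lemma normsum: assumes M: "nonneg_mat M" "M \<in> carrier_mat n n" and i: "i < n"
  shows "cmod (\<Sum>j\<in>{0..<n}. of_real (M $$ (j,i)) * v $ j) \<le> (\<Sum>j\<in>{0..<n}. M $$ (j,i) * cmod (v $ j))"
proof -
  have "cmod (\<Sum>j\<in>{0..<n}. of_real (M $$ (j,i)) * v $ j) \<le> (\<Sum>j\<in>{0..<n}. cmod (of_real (M $$ (j,i)) * v $ j))"
    by (rule norm_sum)
  also have "\<dots> = (\<Sum>j\<in>{0..<n}. M $$ (j,i) * cmod (v $ j))"
  proof (rule sum.cong)
    fix j assume "j \<in> {0..<n}"
    hence "0 \<le> M $$ (j,i)" using M i unfolding nonneg_mat_def by auto
    thus "cmod (of_real (M $$ (j,i)) * v $ j) = M $$ (j,i) * cmod (v $ j)" by (simp add: norm_mult)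
  qed simp
  finally show ?thesis .
qed

lemma sumnn: assumes M: "nonneg_mat M" "M \<in> carrier_mat n n" and i: "i < n"
  shows "0 \<le> (\<Sum>j\<in>{0..<n}. M $$ (j,i) * cmod (v $ j))"
  using M i unfolding nonneg_mat_def by (intro sum_nonneg mult_nonneg_nonneg) auto

lemma spec_bound:
  fixes K L X2 Z Q :: "real mat"
  assumes K: "K \<in> carrier_mat n n" and L: "L \<in> carrier_mat n n"
    and nK: "nonneg_mat K" and nL: "nonneg_mat L"
    and X2: "X2 \<in> carrier_mat n m" and Z: "Z \<in> carrier_mat n m" and Q: "Q \<in> carrier_mat m n"
    and nX: "nonneg_mat X2" and nZ: "nonneg_mat Z"
    and ZG: "(1\<^sub>m n - (K + L)) * Z = X2" and GQ: "K + L = X2 * Q" and n: "0 < n"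
  shows "real_spectral_radius (four_block_mat K L (1\<^sub>m n) (0\<^sub>m n n)) < 1"
proof -
  define W where "W = four_block_mat K L (1\<^sub>m n) (0\<^sub>m n n)"
  define Wc where "Wc = map_mat complex_of_real W"
  have Wcc: "Wc \<in> carrier_mat (n + n) (n + n)" unfolding Wc_def W_def using K L by auto
  obtain l where l: "l \<in> spectrum Wc" and rho: "spectral_radius Wc = cmod l"
    using spectral_radius_mem_max(1)[OF Wcc] n by auto
  have "cmod l < 1"
  proof (rule ccontr)
    assume "\<not> cmod l < 1"
    hence l1: "1 \<le> cmod l" by simp
    have "eigenvalue Wc l" using l unfolding spectrum_def by simp
    hence "eigenvalue (transpose_mat Wc) l" by (rule eig_transpose[OF Wcc])
    then obtain v where v: "v \<in> carrier_vec (n + n)" "v \<noteq> 0\<^sub>v (n + n)"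
      "transpose_mat Wc *\<^sub>v v = l \<cdot>\<^sub>v v"
      unfolding eigenvalue_def eigenvector_def using Wcc by auto
    have e1: "(\<Sum>j\<in>{0..<n}. of_real (K $$ (j,i)) * v $ j) + v $ (n + i) = l * v $ i" if i: "i < n" for i
    proof -
      have "(transpose_mat Wc *\<^sub>v v) $ i = l * v $ i" using v(3) v(1) i by simp
      thus ?thesis using wT_index(1)[OF K L v(1) i] unfolding Wc_def W_def by simp
    qed
    have e2: "(\<Sum>j\<in>{0..<n}. of_real (L $$ (j,i)) * v $ j) = l * v $ (n + i)" if i: "i < n" for i
    proof -
      have "(transpose_mat Wc *\<^sub>v v) $ (n + i) = l * v $ (n + i)" using v(3) v(1) i by simp
      thus ?thesis using wT_index(2)[OF K L v(1) i] unfolding Wc_def W_def by simp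
    qed
    define w where "w = vec n (\<lambda>i. cmod (v $ i))"
    have wc: "w \<in> carrier_vec n" unfolding w_def by simp
    have w0: "0 \<le> w $ i" if "i < n" for i unfolding w_def using that by simp
    have sub: "w $ i \<le> (transpose_mat (K + L) *\<^sub>v w) $ i" if i: "i < n" for i
    proof -
      define a where "a = (\<Sum>j\<in>{0..<n}. of_real (K $$ (j,i)) * v $ j)"
      define b where "b = (\<Sum>j\<in>{0..<n}. of_real (L $$ (j,i)) * v $ j)"
      define ak where "ak = (\<Sum>j\<in>{0..<n}. K $$ (j,i) * cmod (v $ j))"
      define bk where "bk = (\<Sum>j\<in>{0..<n}. L $$ (j,i) * cmod (v $ j))"
      have na: "cmod a \<le> ak" unfolding a_def ak_def by (rule normsum[OF nK K i])
      have nb: "cmod b \<le> bk" unfolding b_def bk_def by (rule normsum[OF nL L i])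
      have bk0: "0 \<le> bk" unfolding bk_def by (rule sumnn[OF nL L i])
      have h1: "l * v $ i = a + v $ (n + i)" using e1[OF i] unfolding a_def by simp
      have h2: "b = l * v $ (n + i)" using e2[OF i] unfolding b_def by simp
      have "l * (l * v $ i) = l * a + b" unfolding h1 h2 by (simp add: algebra_simps)
      hence "cmod (l * (l * v $ i)) = cmod (l * a + b)" by (rule arg_cong)
      hence "cmod l * (cmod l * cmod (v $ i)) = cmod (l * a + b)" by (simp only: norm_mult)
      also have "\<dots> \<le> cmod l * cmod a + cmod b" using norm_triangle_ineq[of "l * a" b] by (simp add: norm_mult)
      also have "\<dots> \<le> cmod l * ak + bk" using na nb by (intro add_mono mult_left_mono) auto
      also have "\<dots> \<le> cmod l * ak + cmod l * bk" using l1 bk0 by (simp add: mult_right_mono[of 1 "cmod l" bk, simplified])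
      finally have "cmod l * (cmod l * cmod (v $ i)) \<le> cmod l * (ak + bk)" by (simp add: algebra_simps)
      moreover have lpos: "0 < cmod l" using l1 by linarith
      ultimately have h: "cmod l * cmod (v $ i) \<le> ak + bk" by (rule mult_left_le_imp_le)
      have "cmod (v $ i) \<le> cmod l * cmod (v $ i)" using l1 by (simp add: mult_right_mono[of 1 "cmod l", simplified])
      also note h
      also have "ak + bk = (transpose_mat (K + L) *\<^sub>v w) $ i"
        unfolding ak_def bk_def w_def using K L i by (simp add: scalar_prod_def sum.distrib algebra_simps)
      finally show ?thesis unfolding w_def using i by simp
    qed
    have KLc: "K + L \<in> carrier_mat n n" using K L by auto
    have nG: "nonneg_mat (K + L)" using nK nL K L unfolding nonneg_mat_def by auto
    have "w = 0\<^sub>v n" by (rule tele[OF KLc X2 Z Q nX nZ nG ZG GQ wc w0 sub])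
    hence y0: "v $ i = 0" if "i < n" for i
    proof -
      have "w $ i = 0" using \<open>w = 0\<^sub>v n\<close> that by simp
      thus ?thesis unfolding w_def using that by simp
    qed
    have z0: "v $ (n + i) = 0" if i: "i < n" for i
    proof -
      have "(\<Sum>j\<in>{0..<n}. of_real (K $$ (j,i)) * v $ j) = 0" using y0 by (intro sum.neutral) auto
      thus ?thesis using e1[OF i] y0[OF i] by simp
    qed
    have "v = 0\<^sub>v (n + n)"
    proof (rule eq_vecI)
      fix p assume "p < dim_vec (0\<^sub>v (n + n) :: complex vec)"
      hence p: "p < n + n" by simp
      show "v $ p = 0\<^sub>v (n + n) $ p"
      proof (cases "p < n")
        case True thus ?thesis using y0 p by simp
      next
        case False
        then obtain i where "p = n + i" "i < n" using p by (metis add_less_imp_less_left le_Suc_ex not_less)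
        thus ?thesis using z0 p by simp
      qed
    qed (use v(1) in simp)
    thus False using v(2) by simp
  qed
  thus ?thesis unfolding real_spectral_radius_def W_def[symmetric] Wc_def[symmetric] rho .
qed



lemma nn_mult: assumes "nonneg_mat A" "nonneg_mat B" "dim_col A = dim_row B"
  shows "nonneg_mat (A * B)"
  using assms unfolding nonneg_mat_def
  by (auto simp: scalar_prod_def intro!: sum_nonneg mult_nonneg_nonneg)

lemma np_mult_r: assumes "nonneg_mat A" "nonpos_mat B" "dim_col A = dim_row B"
  shows "nonpos_mat (A * B)"
  using assms unfolding nonneg_mat_def nonpos_mat_def
  by (auto simp: scalar_prod_def intro!: sum_nonpos mult_nonneg_nonpos)

lemma nn_minus: assumes "nonneg_mat A" "nonpos_mat B" "dim_row A = dim_row B" "dim_col A = dim_col B"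
  shows "nonneg_mat (A - B)"
  unfolding nonneg_mat_def
proof (intro allI impI)
  fix i j assume i: "i < dim_row (A - B)" and j: "j < dim_col (A - B)"
  have "0 \<le> A $$ (i,j)" "B $$ (i,j) \<le> 0" using assms i j unfolding nonneg_mat_def nonpos_mat_def by auto
  moreover have "(A - B) $$ (i,j) = A $$ (i,j) - B $$ (i,j)" using assms i j by simp
  ultimately show "0 \<le> (A - B) $$ (i,j)" by simp
qed

lemma nn_uminus: assumes "nonpos_mat A" shows "nonneg_mat (- A)"
  using assms unfolding nonneg_mat_def nonpos_mat_def by auto

lemma E_inj:
  fixes M :: "real mat"
  assumes M: "M \<in> carrier_mat m m" and sp: "-1 \<notin> real_spectrum M"
    and x: "x \<in> carrier_vec m" and z: "(1\<^sub>m m + M) *\<^sub>v x = 0\<^sub>v m"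
  shows "x = 0\<^sub>v m"
proof (rule ccontr)
  assume nz: "x \<noteq> 0\<^sub>v m"
  have "(1\<^sub>m m + M) *\<^sub>v x = x + M *\<^sub>v x" using M x by (simp add: add_mult_distrib_mat_vec[of _ m m])
  hence "x + M *\<^sub>v x = 0\<^sub>v m" using z by simp
  hence "M *\<^sub>v x = (-1) \<cdot>\<^sub>v x"
  proof -
    assume h: "x + M *\<^sub>v x = 0\<^sub>v m"
    show ?thesis
    proof (rule eq_vecI)
      fix i assume "i < dim_vec ((-1) \<cdot>\<^sub>v x)"
      hence i: "i < m" using x by simp
      have "(x + M *\<^sub>v x) $ i = 0" using h i by simp
      hence "x $ i + (M *\<^sub>v x) $ i = 0" using i M x by simp
      thus "(M *\<^sub>v x) $ i = ((-1) \<cdot>\<^sub>v x) $ i" using i x by simp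
    qed (use M x in simp)
  qed
  hence "eigenvector M x (-1)" unfolding eigenvector_def using M x nz by auto
  hence "eigenvalue M (-1)" unfolding eigenvalue_def by auto
  from of_real_hom.eigenvalue_hom[OF M this]
  have "eigenvalue (map_mat complex_of_real M) (-1)" by simp
  hence "-1 \<in> real_spectrum M" unfolding real_spectrum_def spectrum_def by simp
  thus False using sp by simp
qed



theorem theorem3p3:
  fixes A P1 R1 S1 P2 R2 S2 :: "real mat" and m n :: nat
  assumes "A \<in> carrier_mat m n" and "0 < m" and "0 < n"
    and "(double_proper_regular A P1 R1 S1 \<and> double_proper_regular A P2 R2 S2) \<or>
         (double_proper_weak_regular A P1 R1 S1 \<and> double_proper_weak_regular A P2 R2 S2)"
    and "null_mat P2 \<subseteq> null_mat R2"
    and "range_mat R2 \<subseteq> range_mat P2"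
    and "-1 \<notin> real_spectrum (R2 * mp_inverse P1)"
    and "nonneg_mat (mp_inverse ((1\<^sub>m m + R2 * mp_inverse P1) * A))"
  shows "real_spectral_radius
           (four_block_mat
              (mp_inverse P2 * R2 * mp_inverse P1 * R1 - mp_inverse P2 * S2)
              (- (mp_inverse P2 * R2 * mp_inverse P1 * S1))
              (1\<^sub>m n) (0\<^sub>m n n)) < 1"
proof -
  note Ac = assms(1)
  have dA: "dim_row A = m" "dim_col A = n" using Ac by auto
  have dps1: "double_proper_splitting A P1 R1 S1" and dps2: "double_proper_splitting A P2 R2 S2"
    using assms(4) unfolding double_proper_regular_def double_proper_weak_regular_def by auto
  from dps1 have P1: "P1 \<in> carrier_mat m n" and R1: "R1 \<in> carrier_mat m n" and S1: "S1 \<in> carrier_mat m n"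
    and A1: "A = P1 - R1 + S1" and rg1: "range_mat P1 = range_mat A" and nl1: "null_mat P1 = null_mat A"
    unfolding double_proper_splitting_def dA by auto
  from dps2 have P2: "P2 \<in> carrier_mat m n" and R2: "R2 \<in> carrier_mat m n" and S2: "S2 \<in> carrier_mat m n"
    and A2: "A = P2 - R2 + S2" and rg2: "range_mat P2 = range_mat A" and nl2: "null_mat P2 = null_mat A"
    unfolding double_proper_splitting_def dA by auto
  define X1 where "X1 = mp_inverse P1"
  define X2 where "X2 = mp_inverse P2"
  have mp1: "mpp P1 X1" unfolding X1_def by (rule mp_props[OF P1])
  have mp2: "mpp P2 X2" unfolding X2_def by (rule mp_props[OF P2])
  have X1c: "X1 \<in> carrier_mat n m" by (rule mpp_dims[OF mp1 P1])
  have X2c: "X2 \<in> carrier_mat n m" by (rule mpp_dims[OF mp2 P2])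
  define E where "E = 1\<^sub>m m + R2 * X1"
  have Ec: "E \<in> carrier_mat m m" unfolding E_def using R2 X1c by (intro carrier_matI) auto
  define Ah where "Ah = E * A"
  have Ahc: "Ah \<in> carrier_mat m n" unfolding Ah_def using Ec Ac by (intro carrier_matI) auto
  define Z where "Z = mp_inverse Ah"
  have mpZ: "mpp Ah Z" unfolding Z_def by (rule mp_props[OF Ahc])
  have Zc: "Z \<in> carrier_mat n m" by (rule mpp_dims[OF mpZ Ahc])
  have nZ: "nonneg_mat Z" using assms(8) unfolding Z_def Ah_def E_def X1_def .
  have d: "dim_row P1 = m" "dim_col P1 = n" "dim_row R1 = m" "dim_col R1 = n" "dim_row S1 = m" "dim_col S1 = n"
    "dim_row P2 = m" "dim_col P2 = n" "dim_row R2 = m" "dim_col R2 = n" "dim_row S2 = m" "dim_col S2 = n"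
    "dim_row X1 = n" "dim_col X1 = m" "dim_row X2 = n" "dim_col X2 = m" "dim_row E = m" "dim_col E = m"
    "dim_row Ah = m" "dim_col Ah = n" "dim_row Z = n" "dim_col Z = m" "dim_row A = m" "dim_col A = n"
    using Ac P1 R1 S1 P2 R2 S2 X1c X2c Ec Ahc Zc by auto
  define K where "K = X2 * R2 * X1 * R1 - X2 * S2"
  define L where "L = - (X2 * R2 * X1 * S1)"
  have Kc: "K \<in> carrier_mat n n" unfolding K_def by (intro carrier_matI) (auto simp: d)
  have Lc: "L \<in> carrier_mat n n" unfolding L_def by (intro carrier_matI) (auto simp: d)
  have dKL: "dim_row K = n" "dim_col K = n" "dim_row L = n" "dim_col L = n" using Kc Lc by auto
  have nn: "nonneg_mat X2 \<and> nonneg_mat K \<and> nonneg_mat L"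
    using assms(4)
  proof
    assume h: "double_proper_regular A P1 R1 S1 \<and> double_proper_regular A P2 R2 S2"
    hence a: "nonneg_mat X1" "nonneg_mat R1" "nonpos_mat S1" "nonneg_mat X2" "nonneg_mat R2" "nonpos_mat S2"
      unfolding double_proper_regular_def X1_def X2_def by auto
    have t: "nonneg_mat (X2 * R2 * X1)" using a by (intro nn_mult) (auto simp: d)
    have "nonneg_mat K" unfolding K_def
      by (intro nn_minus nn_mult t np_mult_r a) (auto simp: d)
    moreover have "nonneg_mat L" unfolding L_def
      by (intro nn_uminus np_mult_r t a) (auto simp: d)
    ultimately show ?thesis using a by auto
  next
    assume h: "double_proper_weak_regular A P1 R1 S1 \<and> double_proper_weak_regular A P2 R2 S2"
    hence a: "nonneg_mat (X1 * R1)" "nonpos_mat (X1 * S1)" "nonneg_mat X2" "nonneg_mat (X2 * R2)" "nonpos_mat (X2 * S2)"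
      unfolding double_proper_weak_regular_def X1_def X2_def by auto
    have e1: "X2 * R2 * X1 * R1 = (X2 * R2) * (X1 * R1)" by (simp add: massoc d)
    have e2: "X2 * R2 * X1 * S1 = (X2 * R2) * (X1 * S1)" by (simp add: massoc d)
    have "nonneg_mat K" unfolding K_def e1
      by (intro nn_minus nn_mult a) (auto simp: d)
    moreover have "nonneg_mat L" unfolding L_def e2
      by (intro nn_uminus np_mult_r a) (auto simp: d)
    ultimately show ?thesis using a by auto
  qed
  hence nX2: "nonneg_mat X2" and nK: "nonneg_mat K" and nL: "nonneg_mat L" by auto
  have Einj: "\<And>x. x \<in> carrier_vec m \<Longrightarrow> E *\<^sub>v x = 0\<^sub>v m \<Longrightarrow> x = 0\<^sub>v m"
  proof -
    fix x :: "real vec" assume "x \<in> carrier_vec m" "E *\<^sub>v x = 0\<^sub>v m"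
    moreover have "R2 * X1 \<in> carrier_mat m m" using R2 X1c by (intro carrier_matI) auto
    ultimately show "x = 0\<^sub>v m" using E_inj[of "R2 * X1" m x] assms(7) unfolding E_def X1_def by blast
  qed
  have Epres: "\<And>y. y \<in> range_mat A \<Longrightarrow> E *\<^sub>v y \<in> range_mat A"
  proof -
    fix y assume y: "y \<in> range_mat A"
    then obtain x0 where x0: "x0 \<in> carrier_vec n" "y = A *\<^sub>v x0" unfolding range_mat_def dA by auto
    have yc: "y \<in> carrier_vec m" using x0 Ac by auto
    have X1y: "X1 *\<^sub>v y \<in> carrier_vec n" using X1c yc by auto
    have "R2 *\<^sub>v (X1 *\<^sub>v y) \<in> range_mat R2" unfolding range_mat_def using X1y d by auto
    hence "R2 *\<^sub>v (X1 *\<^sub>v y) \<in> range_mat A" using assms(6) rg2 by auto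
    then obtain x1 where x1: "x1 \<in> carrier_vec n" "R2 *\<^sub>v (X1 *\<^sub>v y) = A *\<^sub>v x1"
      unfolding range_mat_def dA by auto
    have "E *\<^sub>v y = y + R2 *\<^sub>v (X1 *\<^sub>v y)" unfolding E_def using R2 X1c yc
      by (simp add: add_mult_distrib_mat_vec[of _ m m] massoc_v d)
    also have "\<dots> = A *\<^sub>v (x0 + x1)" unfolding x1(2) x0(2) using Ac x0 x1
      by (simp add: mult_add_distrib_mat_vec[of _ m n])
    finally show "E *\<^sub>v y \<in> range_mat A" unfolding range_mat_def dA using x0 x1 by auto
  qed
  have rAh: "range_mat P2 \<subseteq> range_mat Ah" unfolding rg2 Ah_def
    by (rule range_incl[OF Ac Ec P2 mp2 rg2 Einj Epres])
  have nlAh: "null_mat P2 \<subseteq> null_mat Ah"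
  proof
    fix x assume "x \<in> null_mat P2"
    hence x: "x \<in> null_mat A" using nl2 by simp
    hence xc: "x \<in> carrier_vec n" and Ax: "A *\<^sub>v x = 0\<^sub>v m" unfolding null_mat_def dA by auto
    have "Ah *\<^sub>v x = E *\<^sub>v (A *\<^sub>v x)" unfolding Ah_def using Ec Ac xc by (simp add: massoc_v)
    also have "\<dots> = 0\<^sub>v m" unfolding Ax using Ec by (intro eq_vecI) (auto simp: scalar_prod_def)
    finally show "x \<in> null_mat Ah" unfolding null_mat_def using xc d by auto
  qed
  have v1: "Ah * (X2 * P2) = Ah" by (rule null_kill_eq[OF mp2 P2 Ahc nlAh])
  have v2: "(Ah * Z) * P2 = P2" by (rule range_fix_eq[OF mpZ Ahc P2 rAh])
  have v3: "R2 * (X1 * P1) = R2" using null_kill_eq[OF mp1 P1 R2] nl1 nl2 assms(5) by auto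
  from mpZ have z1: "Ah * Z * Ah = Ah" and z2: "Z * Ah * Z = Z" and z3: "transpose_mat (Ah * Z) = Ah * Z"
    and z4: "transpose_mat (Z * Ah) = Z * Ah" unfolding mpp_def by auto
  from mp2 have p1: "P2 * X2 * P2 = P2" and p2: "X2 * P2 * X2 = X2" and p3: "transpose_mat (P2 * X2) = P2 * X2"
    and p4: "transpose_mat (X2 * P2) = X2 * P2" unfolding mpp_def by auto
  have ZA: "Z * Ah = transpose_mat Ah * transpose_mat Z" using z4 by (simp add: mtrans d)
  have sa1: "Z = transpose_mat Ah * (transpose_mat Z * Z)"
  proof -
    have "Z = (Z * Ah) * Z" using z2 by simp
    also have "\<dots> = (transpose_mat Ah * transpose_mat Z) * Z" unfolding ZA ..
    finally show ?thesis by (simp add: massoc d)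
  qed
  have sa2: "(X2 * P2) * transpose_mat Ah = transpose_mat Ah"
  proof -
    have "transpose_mat (Ah * (X2 * P2)) = transpose_mat (X2 * P2) * transpose_mat Ah" by (simp add: mtrans d)
    thus ?thesis unfolding v1 p4 by simp
  qed
  have ha: "X2 * (P2 * Z) = Z"
  proof -
    have "X2 * (P2 * Z) = (X2 * P2) * (transpose_mat Ah * (transpose_mat Z * Z))"
      using sa1 by (simp add: massoc d)
    also have "\<dots> = ((X2 * P2) * transpose_mat Ah) * (transpose_mat Z * Z)" by (simp add: massoc d)
    also have "\<dots> = Z" unfolding sa2 using sa1 by simp
    finally show ?thesis .
  qed
  have PX: "P2 * X2 = transpose_mat X2 * transpose_mat P2" using p3 by (simp add: mtrans d)
  have sb1: "X2 = X2 * (transpose_mat X2 * transpose_mat P2)"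
  proof -
    have "X2 = X2 * (P2 * X2)" using p2 by (simp add: massoc d)
    thus ?thesis unfolding PX .
  qed
  have sb2: "transpose_mat P2 * (Ah * Z) = transpose_mat P2"
  proof -
    have "transpose_mat ((Ah * Z) * P2) = transpose_mat P2 * transpose_mat (Ah * Z)" by (simp add: mtrans d)
    thus ?thesis unfolding v2 z3 by simp
  qed
  have hb: "X2 * (Ah * Z) = X2"
  proof -
    have "X2 * (Ah * Z) = X2 * (transpose_mat X2 * (transpose_mat P2 * (Ah * Z)))"
      by (subst sb1) (simp add: massoc d)
    also have "\<dots> = X2" unfolding sb2 using sb1 by simp
    finally show ?thesis .
  qed
  define Q where "Q = P2 - Ah"
  have Qc: "Q \<in> carrier_mat m n" unfolding Q_def using P2 Ahc by (intro carrier_matI) auto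
  have h1: "X2 * A = X2 * P2 - X2 * R2 + X2 * S2"
  proof -
    have "X2 * A = X2 * (P2 - R2 + S2)" using A2 by simp
    also have "\<dots> = X2 * P2 - X2 * R2 + X2 * S2" by (simp add: mtk d)
    finally show ?thesis .
  qed
  have h2: "X2 * (R2 * (X1 * A)) = X2 * R2 - X2 * (R2 * (X1 * R1)) + X2 * (R2 * (X1 * S1))"
  proof -
    have "X1 * A = X1 * (P1 - R1 + S1)" using A1 by simp
    also have "\<dots> = X1 * P1 - X1 * R1 + X1 * S1" by (simp add: mtk d)
    finally have "R2 * (X1 * A) = R2 * (X1 * P1) - R2 * (X1 * R1) + R2 * (X1 * S1)" by (simp add: mtk d)
    hence "R2 * (X1 * A) = R2 - R2 * (X1 * R1) + R2 * (X1 * S1)" unfolding v3 .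
    hence "X2 * (R2 * (X1 * A)) = X2 * (R2 - R2 * (X1 * R1) + R2 * (X1 * S1))" by simp
    also have "\<dots> = X2 * R2 - X2 * (R2 * (X1 * R1)) + X2 * (R2 * (X1 * S1))" by (simp add: mtk d)
    finally show ?thesis .
  qed
  have h3: "X2 * Ah = X2 * A + X2 * (R2 * (X1 * A))"
  proof -
    have "(1\<^sub>m m + R2 * X1) * A = 1\<^sub>m m * A + (R2 * X1) * A" by (rule dist_l) (auto simp: d)
    also have "\<dots> = A + R2 * (X1 * A)" using Ac by (simp add: massoc d)
    finally have "Ah = A + R2 * (X1 * A)" unfolding Ah_def E_def .
    hence "X2 * Ah = X2 * (A + R2 * (X1 * A))" by simp
    also have "\<dots> = X2 * A + X2 * (R2 * (X1 * A))" by (rule dist_r) (auto simp: d)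
    finally show ?thesis .
  qed
  have GQ: "K + L = X2 * Q"
  proof (rule eq_matI)
    fix i j assume i: "i < dim_row (X2 * Q)" and j: "j < dim_col (X2 * Q)"
    hence i: "i < n" and j: "j < n" using Qc by (auto simp: d)
    have "X2 * Q = X2 * P2 - X2 * Ah" unfolding Q_def by (simp add: mtk d)
    hence "(X2 * Q) $$ (i,j) = (X2 * P2) $$ (i,j) - (X2 * Ah) $$ (i,j)" using i j by (simp add: d)
    moreover have "(X2 * Ah) $$ (i,j) = (X2 * A) $$ (i,j) + (X2 * (R2 * (X1 * A))) $$ (i,j)"
      unfolding h3 using i j by (simp add: d)
    moreover have "(X2 * A) $$ (i,j) = (X2 * P2) $$ (i,j) - (X2 * R2) $$ (i,j) + (X2 * S2) $$ (i,j)"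
      unfolding h1 using i j by (simp add: d)
    moreover have "(X2 * (R2 * (X1 * A))) $$ (i,j) = (X2 * R2) $$ (i,j) - (X2 * (R2 * (X1 * R1))) $$ (i,j)
        + (X2 * (R2 * (X1 * S1))) $$ (i,j)"
      unfolding h2 using i j by (simp add: d)
    moreover have "(K + L) $$ (i,j) = (X2 * (R2 * (X1 * R1))) $$ (i,j) - (X2 * S2) $$ (i,j)
        - (X2 * (R2 * (X1 * S1))) $$ (i,j)"
      unfolding K_def L_def using i j by (simp add: d massoc)
    ultimately show "(K + L) $$ (i,j) = (X2 * Q) $$ (i,j)" by simp
  qed (use Kc Lc Qc in \<open>auto simp: d\<close>)
  have ZG: "(1\<^sub>m n - (K + L)) * Z = X2"
  proof (rule eq_matI)
    fix i j assume i: "i < dim_row X2" and j: "j < dim_col X2"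
    hence i: "i < n" and j: "j < m" by (auto simp: d)
    have GZ: "(K + L) * Z = X2 * (P2 * Z) - X2 * (Ah * Z)"
      unfolding GQ Q_def by (simp add: mtk d)
    have "(1\<^sub>m n - (K + L)) * Z = Z - (K + L) * Z" using Kc Lc Zc by (simp add: mtk d)
    hence "((1\<^sub>m n - (K + L)) * Z) $$ (i,j) = Z $$ (i,j) - ((K + L) * Z) $$ (i,j)" using i j by (simp add: d dKL)
    also have "((K + L) * Z) $$ (i,j) = Z $$ (i,j) - X2 $$ (i,j)" unfolding GZ ha hb using i j by (simp add: d)
    finally show "((1\<^sub>m n - (K + L)) * Z) $$ (i,j) = X2 $$ (i,j)" by simp
  qed (use Kc Lc Zc in \<open>auto simp: d\<close>)
  have "real_spectral_radius (four_block_mat K L (1\<^sub>m n) (0\<^sub>m n n)) < 1"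
    by (rule spec_bound[OF Kc Lc nK nL X2c Zc Qc nX2 nZ ZG GQ assms(3)])
  thus ?thesis unfolding K_def L_def X1_def X2_def .
qed


end
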